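(* Let $k$ be a field and let $H$ be a numerical semigroup minimally generated by $n<a_2<\cdots<a_n$ with $n\ge 3$ (so the number of minimal generators equals the smallest generator $n$). Then $k[[H]]$ has minimal canonical conductor if and only if $a_n=a_{n-1}+1$.
   Context: A numerical semigroup is an additive submonoid $H\subseteq\mathbb{N}$ with $\mathbb{N}\setminus H$ finite. $k[[H]]$ is the subring of $k[[t]]$ of power series supported on $H$; it is a one-dimensional analytically unramified local domain with integral closure $\overline{R}=k[[t]]$ and it is singular when $H\ne\mathbb{N}$. A one-dimensional singular analytically unramified local domain $R$ with fraction field $Q(R)$ and canonical ideal $\omega$ has minimal canonical conductor if $b(\omega)=\mathfrak{c}(R)$, where $B(\omega)=\bigcup_{m\ge0}(\omega^m:\omega^m)$ with $\omega^m:\omega^m=\{x\in Q(R): x\omega^m\subseteq\omega^m\}$, $b(\omega)=\{x\in B(\omega): xB(\omega)\subseteq R\}$, and $\mathfrak{c}(R)=\{x\in\overline{R}: x\overline{R}\subseteq R\}$; equivalently, $B(\omega)=\overline{R}$. *)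

theory Defs
  imports "HOL-Computational_Algebra.Formal_Laurent_Series"
begin

definition numerical_semigroup :: "nat set \<Rightarrow> bool" where
  "numerical_semigroup H \<longleftrightarrow> 0 \<in> H \<and> (\<forall>x\<in>H. \<forall>y\<in>H. x + y \<in> H) \<and> finite (UNIV - H)"

definition min_gens :: "nat set \<Rightarrow> nat set" where
  "min_gens H = {a \<in> H. a \<noteq> 0 \<and>
     \<not> (\<exists>x\<in>H. \<exists>y\<in>H. x \<noteq> 0 \<and> y \<noteq> 0 \<and> a = x + y)}"

text \<open>Power series t-expansions supported on H (viewed inside Laurent series).\<close>
definition sgring :: "nat set \<Rightarrow> 'a::field fls set" where
  "sgring H = {f. \<forall>i. fls_nth f i \<noteq> 0 \<longrightarrow> 0 \<le> i \<and> nat i \<in> H}"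

text \<open>k[[t]], the integral closure of k[[H]].\<close>
definition pow_series :: "'a::field fls set" where
  "pow_series = {f. \<forall>i<0. fls_nth f i = 0}"

definition frac_ideal :: "'a::field fls set \<Rightarrow> 'a fls set \<Rightarrow> bool" where
  "frac_ideal R M \<longleftrightarrow> 0 \<in> M \<and> (\<forall>x\<in>M. \<forall>y\<in>M. x + y \<in> M) \<and>
     (\<forall>r\<in>R. \<forall>x\<in>M. r * x \<in> M) \<and> (\<exists>x\<in>M. x \<noteq> 0) \<and>
     (\<exists>d\<in>R. d \<noteq> 0 \<and> (\<forall>x\<in>M. d * x \<in> R))"

definition colon :: "'a::field fls set \<Rightarrow> 'a fls set \<Rightarrow> 'a fls set" where
  "colon I J = {x. \<forall>y\<in>J. x * y \<in> I}"

definition fideal_prod :: "'a::field fls set \<Rightarrow> 'a fls set \<Rightarrow> 'a fls set" where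
  "fideal_prod I J = {x. \<exists>(n::nat) f g. x = (\<Sum>i<n. f i * g i) \<and> (\<forall>i<n. f i \<in> I \<and> g i \<in> J)}"

fun ideal_pow :: "'a::field fls set \<Rightarrow> 'a fls set \<Rightarrow> nat \<Rightarrow> 'a fls set" where
  "ideal_pow R w 0 = R"
| "ideal_pow R w (Suc m) = fideal_prod (ideal_pow R w m) w"

definition canonical_ideal :: "'a::field fls set \<Rightarrow> 'a fls set \<Rightarrow> bool" where
  "canonical_ideal R w \<longleftrightarrow> frac_ideal R w \<and>
     (\<forall>I. frac_ideal R I \<longrightarrow> colon w (colon w I) = I)"

definition B_of :: "'a::field fls set \<Rightarrow> 'a fls set \<Rightarrow> 'a fls set" where
  "B_of R w = (\<Union>m. colon (ideal_pow R w m) (ideal_pow R w m))"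

definition b_of :: "'a::field fls set \<Rightarrow> 'a fls set \<Rightarrow> 'a fls set" where
  "b_of R w = {x \<in> B_of R w. \<forall>y\<in>B_of R w. x * y \<in> R}"

definition conductor :: "'a::field fls set \<Rightarrow> 'a fls set \<Rightarrow> 'a fls set" where
  "conductor R Rbar = {x \<in> Rbar. \<forall>y\<in>Rbar. x * y \<in> R}"

definition min_can_conductor :: "'a::field fls set \<Rightarrow> 'a fls set \<Rightarrow> bool" where
  "min_can_conductor R Rbar \<longleftrightarrow>
     (\<forall>w. canonical_ideal R w \<longrightarrow> b_of R w = conductor R Rbar)"

end

theory Submission
  imports Defs
begin

unbundle fps_syntax


definition tpow :: "int \<Rightarrow> 'a::field fls set" where
  "tpow c = {x. \<forall>i<c. x $$ i = 0}"

definition Xp :: "int \<Rightarrow> 'a::field fls" where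
  "Xp c = fls_shift (-c) 1"

lemma Xp_nth[simp]: "Xp c $$ i = (if i = c then 1 else 0)"
  by (simp add: Xp_def)

lemma Xp_mult_nth[simp]: "(Xp c * f) $$ i = f $$ (i - c)"
  by (simp add: Xp_def fls_X_intpow_times_conv_shift)

lemma Xp_nz[simp]: "Xp c \<noteq> 0"
  by (simp add: Xp_def)

lemma Xp_sd[simp]: "fls_subdegree (Xp c) = c"
  by (simp add: Xp_def)

lemma Xp_add: "Xp a * Xp b = Xp (a + b)"
  by (rule fls_eqI) (simp add: algebra_simps)

lemma tpow_ne: "x \<noteq> 0 \<Longrightarrow> x \<in> tpow c \<longleftrightarrow> c \<le> fls_subdegree x"
  unfolding tpow_def using fls_subdegree_geI fls_eq0_below_subdegree by fastforce

lemma tpow_zero[simp]: "0 \<in> tpow c"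
  by (simp add: tpow_def)

lemma tpow_add: "x \<in> tpow c \<Longrightarrow> y \<in> tpow c \<Longrightarrow> x + y \<in> tpow c"
  by (simp add: tpow_def)

lemma tpow_diff: "x \<in> tpow c \<Longrightarrow> y \<in> tpow c \<Longrightarrow> x - y \<in> tpow c"
  by (simp add: tpow_def)

lemma tpow_succ: "x \<in> tpow B \<Longrightarrow> x $$ B = 0 \<Longrightarrow> x \<in> tpow (B + 1)"
proof -
  assume a: "x \<in> tpow B" "x $$ B = 0"
  have "x $$ i = 0" if "i < B + 1" for i
  proof (cases "i < B")
    case True then show ?thesis using a(1) unfolding tpow_def by blast
  next
    case False then have "i = B" using that by simp
    then show ?thesis using a(2) by simp
  qed
  then show ?thesis unfolding tpow_def by blast
qed

lemma tpow_mono: "c \<le> d \<Longrightarrow> tpow d \<subseteq> tpow c"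
  by (auto simp: tpow_def)

lemma tpow_mult: "x \<in> tpow a \<Longrightarrow> y \<in> tpow b \<Longrightarrow> x * y \<in> tpow (a + b)"
proof (cases "x = 0 \<or> y = 0")
  case True then show ?thesis by auto
next
  case False
  assume "x \<in> tpow a" "y \<in> tpow b"
  then have "a \<le> fls_subdegree x" "b \<le> fls_subdegree y" using False tpow_ne by auto
  then show ?thesis unfolding tpow_def by (auto intro!: fls_times_nth_eq0)
qed

lemma tpow_const: "x \<in> tpow c \<Longrightarrow> fls_const k * x \<in> tpow c"
  by (simp add: tpow_def)

lemma Xp_tpow: "Xp c \<in> tpow c"
  by (simp add: tpow_def)

lemma tpow_div:
  fixes x q :: "'a::field fls"
  assumes "x \<noteq> 0" "q \<in> tpow (fls_subdegree x + c)"
  shows "q / x \<in> tpow c" "x * (q / x) = q"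
proof -
  show "x * (q / x) = q" using assms by simp
  show "q / x \<in> tpow c"
  proof (cases "q = 0")
    case True then show ?thesis by simp
  next
    case False
    then have nz: "q / x \<noteq> 0" using assms by simp
    have "fls_subdegree q = fls_subdegree x + fls_subdegree (q / x)"
      using \<open>x * (q / x) = q\<close> fls_subdegree_mult[OF assms(1) nz] by simp
    moreover have "fls_subdegree x + c \<le> fls_subdegree q" using assms False tpow_ne by blast
    ultimately show ?thesis using tpow_ne[OF nz] by simp
  qed
qed

lemma tpow_eq_mult:
  fixes x :: "'a::field fls"
  assumes "x \<noteq> 0"
  shows "tpow (fls_subdegree x + c) = (\<lambda>y. x * y) ` tpow c"
proof
  show "tpow (fls_subdegree x + c) \<subseteq> (\<lambda>y. x * y) ` tpow c"
    using tpow_div[OF assms] by (metis image_eqI subsetI)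
  show "(\<lambda>y. x * y) ` tpow c \<subseteq> tpow (fls_subdegree x + c)"
    using tpow_mult[of x "fls_subdegree x"] tpow_ne[OF assms] by auto
qed

definition lsub :: "'a::field fls set \<Rightarrow> bool" where
  "lsub I \<longleftrightarrow> 0 \<in> I \<and> (\<forall>x\<in>I. \<forall>y\<in>I. x + y \<in> I) \<and> (\<forall>c x. x \<in> I \<longrightarrow> fls_const c * x \<in> I)"

lemma lsub_diff: "lsub I \<Longrightarrow> x \<in> I \<Longrightarrow> y \<in> I \<Longrightarrow> x - y \<in> I"
proof -
  assume l: "lsub I" "x \<in> I" "y \<in> I"
  then have "fls_const (-1) * y \<in> I" unfolding lsub_def by blast
  then have "x + fls_const (-1) * y \<in> I" using l unfolding lsub_def by blast
  moreover have "fls_const (-1) * y = - y"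
    by (metis fls_const_1 fls_const_uminus mult_minus_left mult_1)
  ultimately show ?thesis by simp
qed

lemma lsub_lin: "lsub I \<Longrightarrow> x \<in> I \<Longrightarrow> y \<in> I \<Longrightarrow> x + fls_const c * y \<in> I"
  unfolding lsub_def by blast

lemma lsub_int: "lsub I \<Longrightarrow> lsub (I \<inter> tpow c)"
  unfolding lsub_def using tpow_add tpow_const by auto

lemma dual_aux:
  fixes I :: "'a::field fls set"
  shows "lsub I \<Longrightarrow> tpow (B + int N) \<subseteq> I \<Longrightarrow> I \<subseteq> tpow B \<Longrightarrow> g \<in> tpow B \<Longrightarrow> g \<notin> I
   \<Longrightarrow> \<exists>f. (\<forall>q\<in>I. (f * q) $$ Fi = 0) \<and> (f * g) $$ Fi \<noteq> 0"
proof (induction N arbitrary: B I g)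
  case 0
  then show ?case by auto
next
  case (Suc N)
  show ?case
  proof (cases "\<exists>p\<in>I. p $$ B \<noteq> 0")
    case True
    then obtain p where p: "p \<in> I" "p $$ B \<noteq> 0" by blast
    define I' where "I' = I \<inter> tpow (B + 1)"
    define g' where "g' = g - fls_const (g $$ B / p $$ B) * p"
    have l': "lsub I'" using Suc.prems lsub_int I'_def by blast
    have t': "tpow (B + 1 + int N) \<subseteq> I'"
      using Suc.prems(2) tpow_mono[of "B+1" "B + 1 + int N"] unfolding I'_def by (auto simp: add.assoc)
    have s': "I' \<subseteq> tpow (B + 1)" unfolding I'_def by auto
    have gB: "g' \<in> tpow B" unfolding g'_def
      using Suc.prems p by (intro tpow_diff tpow_const) auto
    have "g' $$ B = 0" using p(2) by (simp add: g'_def)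
    then have g't: "g' \<in> tpow (B + 1)" using gB tpow_succ by blast
    have g'n: "g' \<notin> I'"
    proof
      assume "g' \<in> I'"
      then have "g' + fls_const (g $$ B / p $$ B) * p \<in> I"
        using lsub_lin[OF Suc.prems(1)] p I'_def by blast
      then show False using Suc.prems(5) by (simp add: g'_def)
    qed
    obtain f' where f': "\<forall>q\<in>I'. (f' * q) $$ Fi = 0" "(f' * g') $$ Fi \<noteq> 0"
      using Suc.IH[OF l' t' s' g't g'n] by blast
    define c where "c = - (f' * p) $$ Fi / p $$ B"
    define f where "f = f' + fls_const c * Xp (Fi - B)"
    have Lf: "(f * x) $$ Fi = (f' * x) $$ Fi + c * x $$ B" for x
      by (simp add: f_def distrib_right mult.assoc)
    have fp: "(f * p) $$ Fi = 0" using p(2) by (simp add: Lf c_def)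
    have red: "x - fls_const (x $$ B / p $$ B) * p \<in> I'" if "x \<in> I" for x
    proof -
      have "fls_const (x $$ B / p $$ B) * p \<in> I"
        using Suc.prems(1) p(1) unfolding lsub_def by blast
      then have "x - fls_const (x $$ B / p $$ B) * p \<in> I"
        using lsub_diff[OF Suc.prems(1) that] by blast
      moreover have "x - fls_const (x $$ B / p $$ B) * p \<in> tpow B"
        using Suc.prems(3) that p(1) by (intro tpow_diff tpow_const) auto
      moreover have "(x - fls_const (x $$ B / p $$ B) * p) $$ B = 0" using p(2) by simp
      ultimately show ?thesis unfolding I'_def using tpow_succ by blast
    qed
    have lin: "(f * x) $$ Fi = (f * (x - fls_const (x $$ B / p $$ B) * p)) $$ Fi" for x
    proof -
      have "f * x = f * (x - fls_const (x $$ B / p $$ B) * p) + fls_const (x $$ B / p $$ B) * (f * p)"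
        by (simp add: algebra_simps)
      then have "(f * x) $$ Fi = (f * (x - fls_const (x $$ B / p $$ B) * p)) $$ Fi
          + (x $$ B / p $$ B) * (f * p) $$ Fi"
        by simp
      then show ?thesis using fp by simp
    qed
    have "(f * q) $$ Fi = 0" if "q \<in> I" for q
    proof -
      have "q - fls_const (q $$ B / p $$ B) * p \<in> I'" using red that by blast
      then show ?thesis using lin[of q] f'(1) Lf s' unfolding tpow_def by force
    qed
    moreover have "(f * g) $$ Fi \<noteq> 0"
      using lin[of g] f'(2) Lf \<open>g' $$ B = 0\<close> by (simp add: g'_def)
    ultimately show ?thesis by blast
  next
    case False
    show ?thesis
    proof (cases "g $$ B = 0")
      case False
      have "(Xp (Fi - B) * q) $$ Fi = 0" if "q \<in> I" for q
        using \<open>\<not> (\<exists>p\<in>I. p $$ B \<noteq> 0)\<close> that by simp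
      moreover have "(Xp (Fi - B) * g) $$ Fi \<noteq> 0" using False by simp
      ultimately show ?thesis by blast
    next
      case True
      have s: "I \<subseteq> tpow (B + 1)" using False Suc.prems(3) tpow_succ by blast
      have g: "g \<in> tpow (B + 1)" using True Suc.prems(4) tpow_succ by blast
      have t: "tpow (B + 1 + int N) \<subseteq> I" using Suc.prems(2) by (simp add: add.assoc)
      show ?thesis using Suc.IH[OF Suc.prems(1) t s g Suc.prems(5)] .
    qed
  qed
qed



lemma pow_series_tpow: "pow_series = tpow 0"
  by (simp add: pow_series_def tpow_def)

lemma sum_nonzero_term:
  assumes "(\<Sum>i\<in>A. f i) \<noteq> (0::'a::comm_monoid_add)"
  shows "\<exists>i\<in>A. f i \<noteq> 0"
  using assms sum.not_neutral_contains_not_neutral by metis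

locale sgF =
  fixes H :: "nat set" and F :: nat
  assumes H0: "0 \<in> H"
    and Hadd: "\<And>x y. x \<in> H \<Longrightarrow> y \<in> H \<Longrightarrow> x + y \<in> H"
    and FH: "F \<notin> H"
    and Fabove: "\<And>y. y > F \<Longrightarrow> y \<in> H"
begin

lemma R_mem: "x \<in> (sgring H :: 'a::field fls set) \<longleftrightarrow> (\<forall>i. x $$ i \<noteq> 0 \<longrightarrow> 0 \<le> i \<and> nat i \<in> H)"
  by (simp add: sgring_def)

lemma R_sub: "(sgring H :: 'a::field fls set) \<subseteq> tpow 0"
proof
  fix x :: "'a fls" assume "x \<in> sgring H"
  then have "\<And>i. x $$ i \<noteq> 0 \<Longrightarrow> 0 \<le> i" unfolding sgring_def by blast
  then have "\<And>i. i < 0 \<Longrightarrow> x $$ i = 0" by (meson not_le)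
  then show "x \<in> tpow 0" unfolding tpow_def by blast
qed

lemma R_zero: "0 \<in> (sgring H :: 'a::field fls set)"
  by (simp add: R_mem)

lemma R_add: "x \<in> (sgring H :: 'a::field fls set) \<Longrightarrow> y \<in> sgring H \<Longrightarrow> x + y \<in> sgring H"
  unfolding R_mem
proof (intro allI impI)
  fix i assume a: "\<forall>i. x $$ i \<noteq> 0 \<longrightarrow> 0 \<le> i \<and> nat i \<in> H" "\<forall>i. y $$ i \<noteq> 0 \<longrightarrow> 0 \<le> i \<and> nat i \<in> H"
    and "(x + y) $$ i \<noteq> 0"
  then have "x $$ i \<noteq> 0 \<or> y $$ i \<noteq> 0" by auto
  then show "0 \<le> i \<and> nat i \<in> H" using a by blast
qed

lemma R_diff: "x \<in> (sgring H :: 'a::field fls set) \<Longrightarrow> y \<in> sgring H \<Longrightarrow> x - y \<in> sgring H"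
  unfolding R_mem
proof (intro allI impI)
  fix i assume a: "\<forall>i. x $$ i \<noteq> 0 \<longrightarrow> 0 \<le> i \<and> nat i \<in> H" "\<forall>i. y $$ i \<noteq> 0 \<longrightarrow> 0 \<le> i \<and> nat i \<in> H"
    and "(x - y) $$ i \<noteq> 0"
  then have "x $$ i \<noteq> 0 \<or> y $$ i \<noteq> 0" by auto
  then show "0 \<le> i \<and> nat i \<in> H" using a by blast
qed

lemma R_const: "fls_const c \<in> (sgring H :: 'a::field fls set)"
  unfolding R_mem using H0 by simp

lemma R_one: "1 \<in> (sgring H :: 'a::field fls set)"
  using R_const[of 1] by simp

lemma R_tpow: "tpow (int F + 1) \<subseteq> (sgring H :: 'a::field fls set)"
proof
  fix x :: "'a fls" assume x: "x \<in> tpow (int F + 1)"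
  show "x \<in> sgring H" unfolding R_mem
  proof (intro allI impI)
    fix i assume "x $$ i \<noteq> 0"
    then have "\<not> i < int F + 1" using x unfolding tpow_def by blast
    then have "0 \<le> i" "nat i > F" by auto
    then show "0 \<le> i \<and> nat i \<in> H" using Fabove by blast
  qed
qed

lemma R_Xp: "h \<in> H \<Longrightarrow> Xp (int h) \<in> (sgring H :: 'a::field fls set)"
  unfolding R_mem by simp

lemma R_mult:
  assumes "x \<in> (sgring H :: 'a::field fls set)" "y \<in> sgring H"
  shows "x * y \<in> sgring H"
  unfolding R_mem
proof (intro allI impI)
  fix i assume "(x * y) $$ i \<noteq> 0"
  then have "(\<Sum>j = fls_subdegree x..i - fls_subdegree y. x $$ j * y $$ (i - j)) \<noteq> 0"
    by (simp add: fls_times_nth(2))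
  then obtain j where "x $$ j * y $$ (i - j) \<noteq> 0" using sum_nonzero_term by blast
  then have "x $$ j \<noteq> 0" "y $$ (i - j) \<noteq> 0" by auto
  then have j: "0 \<le> j" "nat j \<in> H" "0 \<le> i - j" "nat (i - j) \<in> H" using assms unfolding R_mem by blast+
  have e: "nat i = nat j + nat (i - j)" using nat_add_distrib[OF j(1) j(3)] by simp
  have "nat j + nat (i - j) \<in> H" using Hadd j(2,4) by blast
  then have "nat i \<in> H" using e by simp
  moreover have "0 \<le> i" using j(1,3) by simp
  ultimately show "0 \<le> i \<and> nat i \<in> H" by blast
qed

end


context sgF begin

lemma fi_intro:
  fixes M :: "'a::field fls set"
  assumes "0 \<in> M" "\<And>x y. x \<in> M \<Longrightarrow> y \<in> M \<Longrightarrow> x + y \<in> M"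
    "\<And>r x. r \<in> sgring H \<Longrightarrow> x \<in> M \<Longrightarrow> r * x \<in> M"
    "x0 \<in> M" "x0 \<noteq> 0" "M \<subseteq> tpow 0"
  shows "frac_ideal (sgring H) M"
  unfolding frac_ideal_def
proof (intro conjI)
  show "0 \<in> M" by fact
  show "\<forall>x\<in>M. \<forall>y\<in>M. x + y \<in> M" using assms(2) by blast
  show "\<forall>r\<in>sgring H. \<forall>x\<in>M. r * x \<in> M" using assms(3) by blast
  show "\<exists>x\<in>M. x \<noteq> 0" using assms(4,5) by blast
  have "Xp (int F + 1) * x \<in> sgring H" if "x \<in> M" for x
  proof -
    have "Xp (int F + 1) * x \<in> tpow (int F + 1 + 0)"
      using tpow_mult[OF Xp_tpow, of x] that assms(6) by blast
    then show ?thesis using R_tpow by auto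
  qed
  moreover have "Xp (int F + 1) \<in> (sgring H :: 'a fls set)" using R_tpow Xp_tpow by blast
  ultimately show "\<exists>d\<in>sgring H. d \<noteq> 0 \<and> (\<forall>x\<in>M. d * x \<in> sgring H)"
    using Xp_nz by blast
qed

lemma fi_R: "frac_ideal (sgring H) (sgring H :: 'a::field fls set)"
  using fi_intro[of "sgring H" 1] R_zero R_add R_mult R_one R_sub by auto

lemma fi_lsub:
  fixes M :: "'a::field fls set"
  assumes "frac_ideal (sgring H) M"
  shows "lsub M"
  using assms R_const unfolding frac_ideal_def lsub_def by blast

lemma fi_mod:
  fixes M :: "'a::field fls set"
  assumes "frac_ideal (sgring H) M" "r \<in> sgring H" "x \<in> M"
  shows "r * x \<in> M"
  using assms unfolding frac_ideal_def by blast

lemma fi_lower: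
  fixes M :: "'a::field fls set"
  assumes "frac_ideal (sgring H) M"
  shows "\<exists>B. M \<subseteq> tpow B"
proof -
  obtain d where d: "d \<in> sgring H" "d \<noteq> 0" "\<And>x. x \<in> M \<Longrightarrow> d * x \<in> sgring H"
    using assms unfolding frac_ideal_def by blast
  have "x \<in> tpow (- fls_subdegree d)" if "x \<in> M" for x
  proof (cases "x = 0")
    case True then show ?thesis by simp
  next
    case False
    have "d * x \<in> tpow 0" using d(3)[OF that] R_sub by blast
    moreover have "d * x \<noteq> 0" using d(2) False by simp
    ultimately have "0 \<le> fls_subdegree (d * x)" using tpow_ne by blast
    then have "- fls_subdegree d \<le> fls_subdegree x" using d(2) False by simp
    then show ?thesis using tpow_ne[OF False] by blast
  qed
  then show ?thesis by blast
qed

lemma fi_upper: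
  fixes M :: "'a::field fls set"
  assumes "frac_ideal (sgring H) M" "x \<in> M" "x \<noteq> 0"
  shows "tpow (fls_subdegree x + (int F + 1)) \<subseteq> M"
proof
  fix q :: "'a fls" assume "q \<in> tpow (fls_subdegree x + (int F + 1))"
  then have "q / x \<in> tpow (int F + 1)" "x * (q / x) = q" using tpow_div[OF assms(3)] by auto
  then have "q / x \<in> sgring H" using R_tpow by blast
  then have "(q / x) * x \<in> M" using fi_mod[OF assms(1) _ assms(2)] by blast
  then show "q \<in> M" using \<open>x * (q / x) = q\<close> by (simp add: mult.commute)
qed

lemma colon_R:
  fixes w :: "'a::field fls set"
  assumes "frac_ideal (sgring H) w"
  shows "colon w (sgring H) = w"
proof
  show "colon w (sgring H) \<subseteq> w"
    unfolding colon_def using R_one by force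
  show "w \<subseteq> colon w (sgring H)"
  proof
    fix x assume x: "x \<in> w"
    show "x \<in> colon w (sgring H)" unfolding colon_def
    proof (intro CollectI ballI)
      fix y assume "y \<in> (sgring H :: 'a fls set)"
      then have "y * x \<in> w" using fi_mod[OF assms _ x] by blast
      then show "x * y \<in> w" by (simp add: mult.commute)
    qed
  qed
qed

lemma canon_ww:
  fixes w :: "'a::field fls set"
  assumes "canonical_ideal (sgring H) w"
  shows "colon w w = sgring H"
proof -
  have fw: "frac_ideal (sgring H) w" using assms unfolding canonical_ideal_def by blast
  have "colon w (colon w (sgring H)) = sgring H"
    using assms fi_R unfolding canonical_ideal_def by blast
  then show ?thesis using colon_R[OF fw] by simp
qed

end


lemma colonI: "(\<And>y. y \<in> J \<Longrightarrow> x * y \<in> I) \<Longrightarrow> x \<in> colon I J"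
  unfolding colon_def by blast

lemma colonD: "x \<in> colon I J \<Longrightarrow> y \<in> J \<Longrightarrow> x * y \<in> I"
  unfolding colon_def by blast

context sgF begin

definition w0 :: "'a::field fls set" where
  "w0 = {g. \<forall>h\<in>H. g $$ (int F - int h) = 0}"

lemma w0_sub: "(w0 :: 'a::field fls set) \<subseteq> tpow 0"
proof
  fix g :: "'a fls" assume g: "g \<in> w0"
  have "g $$ i = 0" if "i < 0" for i
  proof -
    have "nat (int F - i) > F" using that by simp
    then have "nat (int F - i) \<in> H" using Fabove by blast
    then have "g $$ (int F - int (nat (int F - i))) = 0" using g unfolding w0_def by blast
    then show ?thesis using that by simp
  qed
  then show "g \<in> tpow 0" unfolding tpow_def by blast
qed

lemma w0_one: "(1::'a::field fls) \<in> w0"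
  unfolding w0_def using FH by auto

lemma w0_zero: "(0::'a::field fls) \<in> w0"
  unfolding w0_def by auto

lemma w0_add: "x \<in> (w0::'a::field fls set) \<Longrightarrow> y \<in> w0 \<Longrightarrow> x + y \<in> w0"
  unfolding w0_def by auto

lemma w0_mod:
  assumes r: "r \<in> (sgring H :: 'a::field fls set)" and g: "g \<in> w0"
  shows "r * g \<in> w0"
  unfolding w0_def
proof (intro CollectI ballI)
  fix h assume h: "h \<in> H"
  have z: "r $$ j * g $$ (int F - int h - j) = 0" for j
  proof (cases "r $$ j = 0")
    case False
    then have j: "0 \<le> j" "nat j \<in> H" using r unfolding R_mem by blast+
    then have "h + nat j \<in> H" using Hadd h by blast
    then have "g $$ (int F - int (h + nat j)) = 0" using g unfolding w0_def by blast
    moreover have e: "int F - int h - j = int F - int (h + nat j)" using j by simp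
    ultimately have "g $$ (int F - int h - j) = 0" using arg_cong[OF e, of "fls_nth g"] by simp
    then show ?thesis by simp
  qed simp
  show "(r * g) $$ (int F - int h) = 0"
    unfolding fls_times_nth(2)[of r g] by (rule sum.neutral, intro ballI, rule z)
qed

lemma fi_w0: "frac_ideal (sgring H) (w0 :: 'a::field fls set)"
  using fi_intro[of w0 1] w0_zero w0_add w0_mod w0_one w0_sub by auto

lemma w0_colon_char:
  fixes J :: "'a::field fls set"
  assumes J: "\<And>h y. h \<in> H \<Longrightarrow> y \<in> J \<Longrightarrow> Xp (int h) * y \<in> J"
  shows "x \<in> colon w0 J \<longleftrightarrow> (\<forall>y\<in>J. (x * y) $$ int F = 0)"
proof
  assume "x \<in> colon w0 J"
  then have "\<forall>y\<in>J. x * y \<in> w0" unfolding colon_def by blast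
  then show "\<forall>y\<in>J. (x * y) $$ int F = 0" unfolding w0_def using H0 by force
next
  assume a: "\<forall>y\<in>J. (x * y) $$ int F = 0"
  show "x \<in> colon w0 J" unfolding colon_def
  proof (intro CollectI ballI)
    fix y assume y: "y \<in> J"
    show "x * y \<in> w0" unfolding w0_def
    proof (intro CollectI ballI)
      fix h assume h: "h \<in> H"
      have "(x * (Xp (int h) * y)) $$ int F = 0" using a J[OF h y] by blast
      moreover have "x * (Xp (int h) * y) = Xp (int h) * (x * y)" by (simp add: algebra_simps)
      ultimately show "(x * y) $$ (int F - int h) = 0" by simp
    qed
  qed
qed

lemma canon_w0: "canonical_ideal (sgring H) (w0 :: 'a::field fls set)"
  unfolding canonical_ideal_def
proof (intro conjI allI impI)
  show "frac_ideal (sgring H) (w0 :: 'a fls set)" by (rule fi_w0)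
  fix I :: "'a fls set" assume fI: "frac_ideal (sgring H) I"
  have XI: "\<And>h y. h \<in> H \<Longrightarrow> y \<in> I \<Longrightarrow> Xp (int h) * y \<in> I"
    using fi_mod[OF fI] R_Xp by blast
  have XC: "Xp (int h) * x \<in> colon w0 I" if "h \<in> H" "x \<in> colon w0 I" for h x
  proof -
    have "\<forall>y\<in>I. (x * y) $$ int F = 0" using w0_colon_char[OF XI] that(2) by blast
    then have "\<forall>y\<in>I. (Xp (int h) * x * y) $$ int F = 0"
      using XI[OF that(1)] by (metis mult.assoc mult.commute)
    then show ?thesis using w0_colon_char[OF XI] by blast
  qed
  show "colon w0 (colon w0 I) = I"
  proof
    show "I \<subseteq> colon w0 (colon w0 I)"
    proof
      fix g assume g: "g \<in> I"
      show "g \<in> colon w0 (colon w0 I)"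
      proof (rule colonI)
        fix x assume "x \<in> colon w0 I"
        then have "x * g \<in> w0" using g colonD by blast
        then show "g * x \<in> w0" by (simp add: mult.commute)
      qed
    qed
    show "colon w0 (colon w0 I) \<subseteq> I"
    proof
      fix g assume g: "g \<in> colon w0 (colon w0 I)"
      show "g \<in> I"
      proof (rule ccontr)
        assume gI: "g \<notin> I"
        have g0: "g \<noteq> 0" using gI fI unfolding frac_ideal_def by blast
        obtain B where B: "I \<subseteq> tpow B" using fi_lower[OF fI] by blast
        obtain x0 where x0: "x0 \<in> I" "x0 \<noteq> 0" using fI unfolding frac_ideal_def by blast
        have up: "tpow (fls_subdegree x0 + (int F + 1)) \<subseteq> I" using fi_upper[OF fI x0] .
        define B' where "B' = min B (fls_subdegree g)"
        define N where "N = nat (fls_subdegree x0 + (int F + 1) - B')"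
        have "I \<subseteq> tpow B'" using B tpow_mono[of B' B] unfolding B'_def by auto
        moreover have "g \<in> tpow B'" using tpow_ne[OF g0] unfolding B'_def by simp
        moreover have "tpow (B' + int N) \<subseteq> I"
        proof -
          have "fls_subdegree x0 + (int F + 1) \<le> B' + int N" unfolding N_def by simp
          then show ?thesis using up tpow_mono by blast
        qed
        ultimately obtain f where f: "\<forall>q\<in>I. (f * q) $$ int F = 0" "(f * g) $$ int F \<noteq> 0"
          using dual_aux[OF fi_lsub[OF fI], of B' N g "int F"] gI by blast
        have "f \<in> colon w0 I" using w0_colon_char[OF XI] f(1) by blast
        then have "(g * f) $$ int F = 0" using w0_colon_char[OF XC, of g] g by blast
        then show False using f(2) by (simp add: mult.commute)
      qed
    qed
  qed
qed

end


definition S1 :: "'a::field fls set" where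
  "S1 = {g. g \<in> tpow 0 \<and> g $$ 1 = 0}"

lemma S1_mult:
  fixes x y :: "'a::field fls"
  assumes "x \<in> S1" "y \<in> S1"
  shows "x * y \<in> S1"
proof -
  have x: "x \<in> tpow 0" "x $$ 1 = 0" and y: "y \<in> tpow 0" "y $$ 1 = 0" using assms unfolding S1_def by auto
  have z: "x $$ j * y $$ (1 - j) = 0" for j
  proof -
    consider "j < 0" | "j = 0" | "j = 1" | "j > 1" by linarith
    then show ?thesis
    proof cases
      case 1 then show ?thesis using x(1) unfolding tpow_def by simp
    next
      case 2 then show ?thesis using y(2) by simp
    next
      case 3 then show ?thesis using x(2) by simp
    next
      case 4 then have "1 - j < 0" by simp
      then show ?thesis using y(1) unfolding tpow_def by simp
    qed
  qed
  have "(x * y) $$ 1 = 0"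
    unfolding fls_times_nth(2)[of x y] by (rule sum.neutral, intro ballI, rule z)
  moreover have "x * y \<in> tpow 0" using tpow_mult[OF x(1) y(1)] by simp
  ultimately show ?thesis unfolding S1_def by blast
qed

lemma S1_add: "x \<in> S1 \<Longrightarrow> y \<in> S1 \<Longrightarrow> x + y \<in> (S1 :: 'a::field fls set)"
  unfolding S1_def using tpow_add by auto

lemma S1_zero: "0 \<in> (S1 :: 'a::field fls set)"
  unfolding S1_def by simp

lemma S1_sum:
  fixes f :: "nat \<Rightarrow> 'a::field fls" and n :: nat
  shows "(\<And>i. i < n \<Longrightarrow> f i \<in> S1) \<Longrightarrow> (\<Sum>i<n. f i) \<in> S1"
proof (induction n)
  case 0 then show ?case by (simp add: S1_zero)
next
  case (Suc n)
  then have "sum f {..<n} \<in> S1" "f n \<in> S1" by auto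
  then show ?case using S1_add by simp
qed

lemma fprod_sub:
  fixes A B :: "'a::field fls set"
  assumes "A \<subseteq> S1" "B \<subseteq> S1"
  shows "fideal_prod A B \<subseteq> S1"
proof
  fix x assume "x \<in> fideal_prod A B"
  then obtain n :: nat and f g :: "nat \<Rightarrow> 'a fls" where x: "x = (\<Sum>i<n. f i * g i)" "\<forall>i<n. f i \<in> A \<and> g i \<in> B"
    unfolding fideal_prod_def by blast
  have "f i * g i \<in> S1" if "i < n" for i using x(2) that assms S1_mult by blast
  then show "x \<in> S1" using x(1) S1_sum[of n "\<lambda>i. f i * g i"] by simp
qed

lemma fprod_mult:
  fixes A B :: "'a::field fls set"
  assumes "x \<in> A" "y \<in> B"
  shows "x * y \<in> fideal_prod A B"
  unfolding fideal_prod_def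
proof (intro CollectI exI conjI)
  show "x * y = (\<Sum>i<(1::nat). (\<lambda>_. x) i * (\<lambda>_. y) i)" by simp
  show "\<forall>i<(1::nat). (\<lambda>_. x) i \<in> A \<and> (\<lambda>_. y) i \<in> B" using assms by simp
qed

lemma colon_self_sub: "1 \<in> X \<Longrightarrow> colon X X \<subseteq> X"
  unfolding colon_def by force

context sgF begin

lemma R_S1: "1 \<notin> H \<Longrightarrow> (sgring H :: 'a::field fls set) \<subseteq> S1"
proof
  fix x :: "'a fls" assume "1 \<notin> H" "x \<in> sgring H"
  then have "x $$ 1 = 0" unfolding R_mem by force
  then show "x \<in> S1" using R_sub \<open>x \<in> sgring H\<close> unfolding S1_def by blast
qed

lemma w0_S1: "F - 1 \<in> H \<Longrightarrow> F \<ge> 1 \<Longrightarrow> (w0 :: 'a::field fls set) \<subseteq> S1"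
proof
  fix x :: "'a fls" assume a: "F - 1 \<in> H" "F \<ge> 1" "x \<in> w0"
  then have "x $$ (int F - int (F - 1)) = 0" unfolding w0_def by blast
  then have "x $$ 1 = 0" using a(2) by (simp add: of_nat_diff)
  then show "x \<in> S1" using w0_sub a(3) unfolding S1_def by blast
qed

lemma notMCC:
  assumes H1: "1 \<notin> H" and F1H: "F - 1 \<in> H" and F1: "F \<ge> 1"
  shows "\<not> min_can_conductor (sgring H :: 'a::field fls set) pow_series"
proof
  assume mcc: "min_can_conductor (sgring H :: 'a fls set) pow_series"
  let ?R = "sgring H :: 'a fls set"
  have eq: "b_of ?R w0 = conductor ?R pow_series"
    using mcc canon_w0 unfolding min_can_conductor_def by blast
  have powS: "ideal_pow ?R w0 m \<subseteq> S1" for m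
  proof (induction m)
    case 0 then show ?case using R_S1[OF H1] by simp
  next
    case (Suc m) then show ?case using fprod_sub w0_S1[OF F1H F1] by simp
  qed
  have pow1: "1 \<in> ideal_pow ?R w0 m" for m
  proof (induction m)
    case 0 then show ?case using R_one by simp
  next
    case (Suc m) then show ?case using fprod_mult[of 1 _ 1] w0_one by fastforce
  qed
  have BS: "B_of ?R w0 \<subseteq> S1"
  proof
    fix x assume "x \<in> B_of ?R w0"
    then obtain m where "x \<in> colon (ideal_pow ?R w0 m) (ideal_pow ?R w0 m)"
      unfolding B_of_def by blast
    then show "x \<in> S1" using colon_self_sub[OF pow1] powS by blast
  qed
  define z :: "'a fls" where "z = Xp (int (F - 1))"
  have zR: "z \<in> ?R" unfolding z_def using R_Xp[OF F1H] .
  have zB: "z \<in> B_of ?R w0"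
  proof -
    have "z \<in> colon ?R ?R" using zR R_mult by (intro colonI) blast
    then have "z \<in> colon (ideal_pow ?R w0 0) (ideal_pow ?R w0 0)" by simp
    then show ?thesis unfolding B_of_def by blast
  qed
  have zy: "z * y \<in> ?R" if "y \<in> B_of ?R w0" for y
  proof -
    have y: "y \<in> tpow 0" "y $$ 1 = 0" using BS that unfolding S1_def by auto
    show ?thesis unfolding R_mem
    proof (intro allI impI)
      fix i assume nz: "(z * y) $$ i \<noteq> 0"
      then have yi: "y $$ (i - int (F - 1)) \<noteq> 0" unfolding z_def by simp
      then have "\<not> i - int (F - 1) < 0" using y(1) unfolding tpow_def by blast
      moreover have "i - int (F - 1) \<noteq> 1" using yi y(2) by auto
      ultimately have "i = int (F - 1) \<or> i > int F" using F1 by auto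
      then show "0 \<le> i \<and> nat i \<in> H" using F1H Fabove by auto
    qed
  qed
  have "z \<in> b_of ?R w0" unfolding b_of_def using zB zy by blast
  then have "z \<in> conductor ?R pow_series" using eq by simp
  moreover have "Xp 1 \<in> (pow_series :: 'a fls set)" unfolding pow_series_tpow using Xp_tpow tpow_mono
    by (metis subsetD zero_le_one)
  ultimately have "z * Xp 1 \<in> ?R" unfolding conductor_def by blast
  moreover have "z * Xp 1 = Xp (int F)" unfolding z_def Xp_add using F1 by (simp add: of_nat_diff)
  ultimately have "Xp (int F) \<in> ?R" by simp
  then have "(Xp (int F) :: 'a fls) $$ int F = 0 \<or> nat (int F) \<in> H" unfolding R_mem by blast
  then show False using FH by simp
qed

end


lemma min_order:
  fixes w :: "'a::field fls set"
  assumes "w \<subseteq> tpow B0" "x0 \<in> w" "x0 \<noteq> 0"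
  shows "\<exists>g\<in>w. g \<noteq> 0 \<and> (\<forall>y\<in>w. y \<noteq> 0 \<longrightarrow> fls_subdegree g \<le> fls_subdegree y)"
proof -
  define P where "P j \<longleftrightarrow> (\<exists>x\<in>w. x \<noteq> 0 \<and> fls_subdegree x = B0 + int j)" for j
  have lb: "B0 \<le> fls_subdegree y" if "y \<in> w" "y \<noteq> 0" for y
    using assms(1) that tpow_ne by blast
  have "P (nat (fls_subdegree x0 - B0))" unfolding P_def using assms(2,3) lb[OF assms(2,3)] by auto
  then have P0: "P (LEAST j. P j)" by (rule LeastI)
  then obtain g where g: "g \<in> w" "g \<noteq> 0" "fls_subdegree g = B0 + int (LEAST j. P j)"
    unfolding P_def by blast
  have "fls_subdegree g \<le> fls_subdegree y" if "y \<in> w" "y \<noteq> 0" for y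
  proof -
    have "P (nat (fls_subdegree y - B0))" unfolding P_def using that lb[OF that] by auto
    then have "(LEAST j. P j) \<le> nat (fls_subdegree y - B0)" by (rule Least_le)
    then show ?thesis using g(3) lb[OF that] by linarith
  qed
  then show ?thesis using g by blast
qed

lemma L1:
  fixes J :: "'a::field fls set"
  assumes "lsub J"
  shows "tpow (c + int N) \<subseteq> J \<Longrightarrow> (\<And>i. i < N \<Longrightarrow> \<exists>x\<in>J. x \<noteq> 0 \<and> fls_subdegree x = c + int i) \<Longrightarrow> tpow c \<subseteq> J"
proof (induction N arbitrary: c)
  case 0 then show ?case by simp
next
  case (Suc N)
  have t: "tpow (c + 1 + int N) \<subseteq> J" using Suc.prems(1) by (simp add: add.assoc)
  have v: "\<exists>x\<in>J. x \<noteq> 0 \<and> fls_subdegree x = c + 1 + int i" if "i < N" for i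
    using Suc.prems(2)[of "Suc i"] that by (simp add: add.assoc)
  have J1: "tpow (c + 1) \<subseteq> J" using Suc.IH[OF t v] by blast
  obtain x where x: "x \<in> J" "x \<noteq> 0" "fls_subdegree x = c" using Suc.prems(2)[of 0] by auto
  show ?case
  proof
    fix q :: "'a fls" assume q: "q \<in> tpow c"
    define q' where "q' = q - fls_const (q $$ c / x $$ c) * x"
    have "q' \<in> tpow c" unfolding q'_def using q x tpow_ne[OF x(2)]
      by (intro tpow_diff tpow_const) auto
    moreover have "x $$ c \<noteq> 0" using x(2,3) nth_fls_subdegree_nonzero by blast
    then have "q' $$ c = 0" unfolding q'_def by simp
    ultimately have "q' \<in> J" using tpow_succ J1 by blast
    then have "q' + fls_const (q $$ c / x $$ c) * x \<in> J" using lsub_lin[OF assms _ x(1)] by blast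
    then show "q \<in> J" unfolding q'_def by simp
  qed
qed

lemma tpow_sum:
  fixes f :: "nat \<Rightarrow> 'a::field fls" and n :: nat
  shows "(\<And>i. i < n \<Longrightarrow> f i \<in> tpow c) \<Longrightarrow> (\<Sum>i<n. f i) \<in> tpow c"
proof (induction n)
  case 0 then show ?case by simp
next
  case (Suc n)
  then have "sum f {..<n} \<in> tpow c" "f n \<in> tpow c" by auto
  then show ?case using tpow_add by simp
qed

lemma fprod_tpow:
  fixes A B :: "'a::field fls set"
  assumes "A \<subseteq> tpow a" "B \<subseteq> tpow b"
  shows "fideal_prod A B \<subseteq> tpow (a + b)"
proof
  fix x assume "x \<in> fideal_prod A B"
  then obtain n :: nat and f g :: "nat \<Rightarrow> 'a fls" where x: "x = (\<Sum>i<n. f i * g i)" "\<forall>i<n. f i \<in> A \<and> g i \<in> B"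
    unfolding fideal_prod_def by blast
  have "f i * g i \<in> tpow (a + b)" if "i < n" for i using x(2) that assms tpow_mult by blast
  then show "x \<in> tpow (a + b)" using x(1) tpow_sum[of n "\<lambda>i. f i * g i"] by simp
qed

lemma fprodI:
  fixes A B :: "'a::field fls set" and f g :: "nat \<Rightarrow> 'a fls"
  assumes "x = (\<Sum>i<n. f i * g i)" "\<forall>i<n. f i \<in> A \<and> g i \<in> B"
  shows "x \<in> fideal_prod A B"
  unfolding fideal_prod_def mem_Collect_eq
  by (rule exI[of _ n], rule exI[of _ f], rule exI[of _ g]) (use assms in simp)

lemma fprod_add:
  fixes A B :: "'a::field fls set"
  assumes "x \<in> fideal_prod A B" "y \<in> fideal_prod A B"
  shows "x + y \<in> fideal_prod A B"
proof -
  obtain n1 :: nat and f1 g1 :: "nat \<Rightarrow> 'a fls" where x: "x = (\<Sum>i<n1. f1 i * g1 i)" "\<forall>i<n1. f1 i \<in> A \<and> g1 i \<in> B"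
    using assms(1) unfolding fideal_prod_def by blast
  obtain n2 :: nat and f2 g2 :: "nat \<Rightarrow> 'a fls" where y: "y = (\<Sum>i<n2. f2 i * g2 i)" "\<forall>i<n2. f2 i \<in> A \<and> g2 i \<in> B"
    using assms(2) unfolding fideal_prod_def by blast
  define f where "f i = (if i < n1 then f1 i else f2 (i - n1))" for i
  define g where "g i = (if i < n1 then g1 i else g2 (i - n1))" for i
  have "(\<Sum>i<n1 + n2. f i * g i) = (\<Sum>i<n1. f i * g i) + (\<Sum>i=n1..<n1 + n2. f i * g i)"
    by (simp add: sum.atLeastLessThan_concat[symmetric] lessThan_atLeast0)
  also have "(\<Sum>i<n1. f i * g i) = x" unfolding x(1) f_def g_def by simp
  also have "(\<Sum>i=n1..<n1 + n2. f i * g i) = (\<Sum>i=0..<n2. f (i + n1) * g (i + n1))"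
    using sum.shift_bounds_nat_ivl[of "\<lambda>i. f i * g i" 0 n1 n2] by (simp add: add.commute)
  also have "\<dots> = y" unfolding y(1) f_def g_def by (simp add: lessThan_atLeast0)
  finally have e: "(\<Sum>i<n1 + n2. f i * g i) = x + y" .
  have "\<forall>i<n1 + n2. f i \<in> A \<and> g i \<in> B" unfolding f_def g_def using x(2) y(2) by auto
  then show ?thesis using fprodI[OF e[symmetric]] by blast
qed



context sgF begin

definition Rp :: "int \<Rightarrow> 'a::field fls set" where
  "Rp c = {x. \<exists>r p. x = r + p \<and> r \<in> sgring H \<and> p \<in> tpow c}"

lemma RpI: "r \<in> sgring H \<Longrightarrow> p \<in> tpow c \<Longrightarrow> r + p \<in> (Rp c :: 'a::field fls set)"
  unfolding Rp_def by blast

lemma fi_Rp: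
  assumes c: "0 \<le> c"
  shows "frac_ideal (sgring H) (Rp c :: 'a::field fls set)"
proof (rule fi_intro[of _ 1])
  show "(0::'a fls) \<in> Rp c" using RpI[OF R_zero tpow_zero] by simp
  show "(1::'a fls) \<in> Rp c" using RpI[OF R_one tpow_zero] by simp
  show "(1::'a fls) \<noteq> 0" by simp
  show "x + y \<in> Rp c" if xy: "x \<in> Rp c" "y \<in> Rp c" for x y :: "'a fls"
  proof -
    obtain r p where x: "x = r + p" "r \<in> sgring H" "p \<in> tpow c" using xy(1) unfolding Rp_def by blast
    obtain r' p' where y: "y = r' + p'" "r' \<in> sgring H" "p' \<in> tpow c" using xy(2) unfolding Rp_def by blast
    have "x + y = (r + r') + (p + p')" using x y by (simp add: algebra_simps)
    then show ?thesis using RpI[OF R_add[OF x(2) y(2)] tpow_add[OF x(3) y(3)]] by simp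
  qed
  show "s * x \<in> Rp c" if sx: "s \<in> sgring H" "x \<in> Rp c" for s x :: "'a fls"
  proof -
    obtain r p where x: "x = r + p" "r \<in> sgring H" "p \<in> tpow c" using sx(2) unfolding Rp_def by blast
    have "s * p \<in> tpow (0 + c)" using tpow_mult[of s 0 p c] R_sub sx(1) x(3) by blast
    moreover have "s * x = s * r + s * p" using x by (simp add: algebra_simps)
    ultimately show ?thesis using RpI[OF R_mult[OF sx(1) x(2)]] by simp
  qed
  show "(Rp c :: 'a fls set) \<subseteq> tpow 0"
  proof
    fix x :: "'a fls" assume "x \<in> Rp c"
    then obtain r p where x: "x = r + p" "r \<in> sgring H" "p \<in> tpow c" unfolding Rp_def by blast
    have "p \<in> tpow 0" using x(3) tpow_mono[OF c] by blast
    then show "x \<in> tpow 0" using x R_sub tpow_add by blast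
  qed
qed

lemma Rp_mono: "c \<le> d \<Longrightarrow> (Rp d :: 'a::field fls set) \<subseteq> Rp c"
  unfolding Rp_def using tpow_mono by blast

lemma canon_dual: "canonical_ideal R w \<Longrightarrow> frac_ideal R I \<Longrightarrow> colon w (colon w I) = I"
  unfolding canonical_ideal_def by blast

lemma colon_anti: "J1 \<subseteq> J2 \<Longrightarrow> colon w J2 \<subseteq> colon w J1"
  unfolding colon_def by blast

lemma P_mod:
  fixes w :: "'a::field fls set"
  shows "x \<in> ideal_pow (sgring H) w m \<Longrightarrow> r \<in> sgring H \<Longrightarrow> r * x \<in> ideal_pow (sgring H) w m"
proof (induction m arbitrary: x)
  case 0 then show ?case using R_mult by simp
next
  case (Suc m)
  then obtain n :: nat and f g :: "nat \<Rightarrow> 'a fls" where x: "x = (\<Sum>i<n. f i * g i)"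
      "\<forall>i<n. f i \<in> ideal_pow (sgring H) w m \<and> g i \<in> w"
    unfolding ideal_pow.simps fideal_prod_def by blast
  have e: "r * x = (\<Sum>i<n. (r * f i) * g i)" unfolding x(1) by (simp add: sum_distrib_left mult.assoc)
  have "\<forall>i<n. r * f i \<in> ideal_pow (sgring H) w m \<and> g i \<in> w" using x(2) Suc by blast
  then show ?case unfolding ideal_pow.simps by (rule fprodI[OF e])
qed

lemma P_zero: "(0 :: 'a::field fls) \<in> ideal_pow (sgring H) w m"
proof (cases m)
  case 0 then show ?thesis using R_zero by simp
next
  case (Suc m')
  have "(0 :: 'a fls) = (\<Sum>i<(0::nat). (\<lambda>_. 0) i * (\<lambda>_. 0) i)" by simp
  then show ?thesis using Suc fprodI[where x=0 and n=0 and f="\<lambda>_. 0" and g="\<lambda>_. 0"] by simp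
qed

lemma P_add:
  fixes w :: "'a::field fls set"
  shows "x \<in> ideal_pow (sgring H) w m \<Longrightarrow> y \<in> ideal_pow (sgring H) w m \<Longrightarrow> x + y \<in> ideal_pow (sgring H) w m"
  by (cases m) (auto simp: R_add fprod_add)

lemma P_lsub: "lsub (ideal_pow (sgring H) w m :: 'a::field fls set)"
  unfolding lsub_def using P_zero P_add P_mod R_const by blast

lemma partB:
  fixes w :: "'a::field fls set"
  assumes F1: "F \<ge> 1" and FH1: "F - 1 \<notin> H" and cw: "canonical_ideal (sgring H) w"
  shows "b_of (sgring H) w = conductor (sgring H) pow_series"
proof -
  let ?R = "sgring H :: 'a fls set"
  have fw: "frac_ideal ?R w" using cw unfolding canonical_ideal_def by blast
  obtain B0 where B0: "w \<subseteq> tpow B0" using fi_lower[OF fw] by blast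
  obtain x0 where x0: "x0 \<in> w" "x0 \<noteq> 0" using fw unfolding frac_ideal_def by blast
  obtain g0 where g0: "g0 \<in> w" "g0 \<noteq> 0" "\<And>y. y \<in> w \<Longrightarrow> y \<noteq> 0 \<Longrightarrow> fls_subdegree g0 \<le> fls_subdegree y"
    using min_order[OF B0 x0] by blast
  define s where "s = fls_subdegree g0"
  have ws: "w \<subseteq> tpow s"
  proof
    fix y assume "y \<in> w"
    then show "y \<in> tpow s" using g0(3) tpow_ne s_def by (cases "y = 0") auto
  qed
  have T1: "tpow (s + (int F + 1)) \<subseteq> w" using fi_upper[OF fw g0(1,2)] s_def by simp
  have T2: "\<not> tpow (s + int F) \<subseteq> w"
  proof
    assume sub: "tpow (s + int F) \<subseteq> w"
    have "Xp (int F) \<in> colon w w"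
    proof (rule colonI)
      fix y assume "y \<in> w"
      then have "Xp (int F) * y \<in> tpow (int F + s)" using tpow_mult[OF Xp_tpow] ws by blast
      moreover have "int F + s = s + int F" by simp
      ultimately show "Xp (int F) * y \<in> w" using sub by auto
    qed
    then have "Xp (int F) \<in> ?R" using canon_ww[OF cw] by simp
    then have "(Xp (int F) :: 'a fls) $$ int F = 0 \<or> nat (int F) \<in> H" unfolding R_mem by blast
    then show False using FH by simp
  qed
  have T3: "\<exists>g1\<in>w. g1 \<noteq> 0 \<and> fls_subdegree g1 = s + 1"
  proof (rule ccontr)
    assume no: "\<not> (\<exists>g1\<in>w. g1 \<noteq> 0 \<and> fls_subdegree g1 = s + 1)"
    have c0: "0 \<le> int F - 1" "0 \<le> int F" using F1 by auto
    have sub1: "colon w (Rp (int F)) \<subseteq> colon w (Rp (int F - 1))"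
    proof
      fix y assume y: "y \<in> colon w (Rp (int F))"
      have yw: "y \<in> w" using colonD[OF y RpI[OF R_one tpow_zero]] by simp
      show "y \<in> colon w (Rp (int F - 1))"
      proof (rule colonI)
        fix q :: "'a fls" assume "q \<in> Rp (int F - 1)"
        then obtain r p where q: "q = r + p" "r \<in> ?R" "p \<in> tpow (int F - 1)" unfolding Rp_def by blast
        have yr: "y * r \<in> w" using colonD[OF y RpI[OF q(2) tpow_zero]] by simp
        have yp: "y * p \<in> w"
        proof (cases "y = 0")
          case True then show ?thesis using fw unfolding frac_ideal_def by simp
        next
          case False
          have "s \<le> fls_subdegree y" using g0(3)[OF yw False] s_def by simp
          moreover have "fls_subdegree y \<noteq> s + 1" using no yw False by blast
          moreover have "fls_subdegree y \<noteq> s"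
          proof
            assume ys: "fls_subdegree y = s"
            have "tpow (s + int F) \<subseteq> w"
            proof
              fix z :: "'a fls" assume "z \<in> tpow (s + int F)"
              then obtain u where u: "u \<in> tpow (int F)" "z = y * u"
                using tpow_eq_mult[OF False, of "int F"] ys by auto
              have "y * (0 + u) \<in> w" using colonD[OF y RpI[OF R_zero u(1)]] .
              then show "z \<in> w" using u by simp
            qed
            then show False using T2 by blast
          qed
          ultimately have "s + 2 \<le> fls_subdegree y" by linarith
          then have "y \<in> tpow (s + 2)" using tpow_ne[OF False] by blast
          then have "y * p \<in> tpow (s + 2 + (int F - 1))" using tpow_mult q(3) by blast
          moreover have "s + 2 + (int F - 1) = s + (int F + 1)" by simp
          ultimately show ?thesis using T1 by auto
        qed
        have "y * q = y * r + y * p" using q(1) by (simp add: algebra_simps)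
        then show "y * q \<in> w" using yr yp fw unfolding frac_ideal_def by simp
      qed
    qed
    have sub2: "colon w (Rp (int F - 1)) \<subseteq> colon w (Rp (int F))"
      using colon_anti[OF Rp_mono[of "int F - 1" "int F"]] by simp
    have "Rp (int F) = (Rp (int F - 1) :: 'a fls set)"
    proof -
      have "Rp (int F) = colon w (colon w (Rp (int F) :: 'a fls set))"
        using canon_dual[OF cw fi_Rp[OF c0(2)]] by simp
      also have "\<dots> = colon w (colon w (Rp (int F - 1)))" using sub1 sub2 by simp
      also have "\<dots> = Rp (int F - 1)"
        using canon_dual[OF cw fi_Rp[OF c0(1)]] by simp
      finally show ?thesis .
    qed
    moreover have "Xp (int F - 1) \<in> (Rp (int F - 1) :: 'a fls set)"
      using RpI[OF R_zero Xp_tpow] by simp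
    ultimately have "Xp (int F - 1) \<in> (Rp (int F) :: 'a fls set)" by simp
    then obtain r p where rp: "(Xp (int F - 1) :: 'a fls) = r + p" "r \<in> ?R" "p \<in> tpow (int F)"
      unfolding Rp_def by blast
    have "(1::'a) = r $$ (int F - 1) + p $$ (int F - 1)"
      using arg_cong[OF rp(1), of "\<lambda>x. x $$ (int F - 1)"] by simp
    moreover have "p $$ (int F - 1) = 0" using rp(3) unfolding tpow_def by simp
    ultimately have "r $$ (int F - 1) \<noteq> 0" by simp
    then have "nat (int F - 1) \<in> H" using rp(2) unfolding R_mem by blast
    then show False using FH1 F1 by (simp add: nat_diff_distrib)
  qed
  then obtain g1 where g1: "g1 \<in> w" "g1 \<noteq> 0" "fls_subdegree g1 = s + 1" by blast
  let ?P = "ideal_pow ?R w"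
  have Plow: "?P m \<subseteq> tpow (int m * s)" for m
  proof (induction m)
    case 0 then show ?case using R_sub by simp
  next
    case (Suc m)
    then have "?P (Suc m) \<subseteq> tpow (int m * s + s)" using fprod_tpow ws by simp
    then show ?case by (simp add: algebra_simps)
  qed
  have Pmul: "x * y \<in> ?P (Suc m)" if "x \<in> ?P m" "y \<in> w" for x y m
    using fprod_mult[OF that] by simp
  have Pgen: "g0 ^ (m - j) * g1 ^ j \<in> ?P m" if "j \<le> m" for m j
    using that
  proof (induction m arbitrary: j)
    case 0 then show ?case using R_one by simp
  next
    case (Suc m)
    show ?case
    proof (cases "j \<le> m")
      case True
      have "g0 ^ (m - j) * g1 ^ j * g0 \<in> ?P (Suc m)" using Pmul[OF Suc.IH[OF True] g0(1)] .
      moreover have "g0 ^ (m - j) * g1 ^ j * g0 = g0 ^ (Suc m - j) * g1 ^ j"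
        using True by (simp add: Suc_diff_le algebra_simps)
      ultimately show ?thesis by simp
    next
      case False
      then have j: "j = Suc m" using Suc.prems by simp
      have "g0 ^ (m - m) * g1 ^ m * g1 \<in> ?P (Suc m)" using Pmul[OF Suc.IH[of m] g1(1)] by simp
      then show ?thesis using j by (simp add: algebra_simps)
    qed
  qed
  have sdgen: "fls_subdegree (g0 ^ (m - j) * g1 ^ j) = int m * s + int j" if "j \<le> m" for m j
  proof -
    have "fls_subdegree (g0 ^ (m - j) * g1 ^ j) = int (m - j) * s + int j * (s + 1)"
      using g0(2) g1(2,3) s_def by (simp add: fls_subdegree_pow)
    then show ?thesis using that by (simp add: of_nat_diff algebra_simps)
  qed
  define m where "m = F + 1"
  have Pm: "?P m = tpow (int m * s)"
  proof
    show "?P m \<subseteq> tpow (int m * s)" by (rule Plow)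
    have up: "tpow (int m * s + int (F + 1)) \<subseteq> ?P m"
    proof
      fix q :: "'a fls" assume q: "q \<in> tpow (int m * s + int (F + 1))"
      have nz: "g0 ^ m \<noteq> 0" using g0(2) by simp
      have sd: "fls_subdegree (g0 ^ m) = int m * s" using s_def by (simp add: fls_subdegree_pow)
      have "int m * s + int (F + 1) = fls_subdegree (g0 ^ m) + (int F + 1)" using sd by simp
      then have q': "q \<in> tpow (fls_subdegree (g0 ^ m) + (int F + 1))" using q by metis
      have "q / g0 ^ m \<in> tpow (int F + 1)" "g0 ^ m * (q / g0 ^ m) = q"
        using tpow_div[OF nz q'] by auto
      then have "q / g0 ^ m \<in> ?R" using R_tpow by blast
      moreover have "g0 ^ m \<in> ?P m" using Pgen[of 0 m] by simp
      ultimately have "(q / g0 ^ m) * g0 ^ m \<in> ?P m" using P_mod by blast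
      then show "q \<in> ?P m" using \<open>g0 ^ m * (q / g0 ^ m) = q\<close> by (simp add: mult.commute)
    qed
    have vals: "\<exists>x\<in>?P m. x \<noteq> 0 \<and> fls_subdegree x = int m * s + int i" if "i < F + 1" for i
    proof -
      have "i \<le> m" using that m_def by simp
      then show ?thesis using Pgen[of i m] sdgen[of i m] g0(2) g1(2) by (intro bexI[of _ "g0 ^ (m - i) * g1 ^ i"]) auto
    qed
    show "tpow (int m * s) \<subseteq> ?P m" using L1[OF P_lsub up vals] by blast
  qed
  have Bq: "B_of ?R w = pow_series"
  proof
    show "B_of ?R w \<subseteq> pow_series"
    proof
      fix x assume "x \<in> B_of ?R w"
      then obtain m' where x: "x \<in> colon (?P m') (?P m')" unfolding B_of_def by blast
      show "x \<in> pow_series"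
      proof (cases "x = 0")
        case True then show ?thesis unfolding pow_series_tpow by simp
      next
        case False
        have "g0 ^ m' \<in> ?P m'" using Pgen[of 0 m'] by simp
        then have "x * g0 ^ m' \<in> tpow (int m' * s)" using colonD[OF x] Plow by blast
        moreover have "x * g0 ^ m' \<noteq> 0" using False g0(2) by simp
        ultimately have "int m' * s \<le> fls_subdegree (x * g0 ^ m')" using tpow_ne by blast
        then have "0 \<le> fls_subdegree x" using False g0(2) s_def by (simp add: fls_subdegree_pow)
        then show ?thesis unfolding pow_series_tpow using tpow_ne[OF False] by blast
      qed
    qed
    show "pow_series \<subseteq> B_of ?R w"
    proof
      fix x :: "'a fls" assume "x \<in> pow_series"
      then have x: "x \<in> tpow 0" unfolding pow_series_tpow .
      have "x \<in> colon (?P m) (?P m)"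
      proof (rule colonI)
        fix y assume "y \<in> ?P m"
        then have "x * y \<in> tpow (0 + int m * s)" using tpow_mult[OF x] Pm by blast
        then show "x * y \<in> ?P m" using Pm by simp
      qed
      then show "x \<in> B_of ?R w" unfolding B_of_def by blast
    qed
  qed
  show ?thesis unfolding b_of_def conductor_def Bq by simp
qed

end


lemma combi:
  fixes H :: "nat set" and n :: nat and a :: "nat \<Rightarrow> nat"
  assumes ns: "numerical_semigroup H"
    and n3: "n \<ge> 3"
    and sm: "strict_mono_on {1..n} a"
    and a1: "a 1 = n"
    and mg: "min_gens H = a ` {1..n}"
  shows "\<exists>F. F \<ge> 1 \<and> F \<notin> H \<and> (\<forall>y>F. y \<in> H) \<and> 1 \<notin> H \<and>
           (F - 1 \<in> H \<longleftrightarrow> a n \<noteq> a (n - 1) + 1)"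
proof -
  have H0: "0 \<in> H" and Hadd: "\<And>x y. x \<in> H \<Longrightarrow> y \<in> H \<Longrightarrow> x + y \<in> H"
    using ns unfolding numerical_semigroup_def by auto
  have gen: "a i \<in> H" "a i \<noteq> 0" "\<And>x y. x \<in> H \<Longrightarrow> y \<in> H \<Longrightarrow> x \<noteq> 0 \<Longrightarrow> y \<noteq> 0 \<Longrightarrow> a i \<noteq> x + y"
    if "i \<in> {1..n}" for i
  proof -
    have "a i \<in> min_gens H" using that mg by auto
    then show "a i \<in> H" "a i \<noteq> 0" "\<And>x y. x \<in> H \<Longrightarrow> y \<in> H \<Longrightarrow> x \<noteq> 0 \<Longrightarrow> y \<noteq> 0 \<Longrightarrow> a i \<noteq> x + y"
      unfolding min_gens_def by blast+
  qed
  have mono: "a i < a j" if "i \<in> {1..n}" "j \<in> {1..n}" "i < j" for i j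
    using sm that unfolding strict_mono_on_def by blast
  have ge: "a i > n" if "i \<in> {2..n}" for i
    using mono[of 1 i] that a1 by auto
  have nH: "n \<in> H" using gen[of 1] a1 n3 by auto
  have mult: "k * n \<in> H" for k
    by (induction k) (auto simp: H0 Hadd nH)
  have one: "1 \<notin> H"
  proof
    assume "1 \<in> H"
    then have "1 \<in> min_gens H" unfolding min_gens_def by auto
    then obtain i where "i \<in> {1..n}" "a i = 1" using mg by auto
    then show False using mono[of 1 i] a1 n3 by (cases "i = 1") auto
  qed
  have modnz: "a i mod n \<noteq> 0" if "i \<in> {2..n}" for i
  proof
    assume "a i mod n = 0"
    then have "n dvd a i" by (simp add: dvd_eq_mod_eq_0)
    then obtain k where "a i = n * k" by (rule dvdE)
    then have k: "a i = k * n" by simp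
    have "k \<ge> 2"
    proof (rule ccontr)
      assume "\<not> k \<ge> 2"
      then have "k \<le> 1" by simp
      then have "k * n \<le> 1 * n" by (rule mult_le_mono1)
      then show False using k ge[OF that] by simp
    qed
    then have "a i = n + (k - 1) * n" using k by (simp add: diff_mult_distrib)
    moreover have "(k - 1) * n \<noteq> 0" using \<open>k \<ge> 2\<close> n3 by simp
    ultimately show False using gen(3)[of i n "(k-1)*n"] that nH mult n3 by auto
  qed
  have same: "y \<in> H" if "i \<in> {2..n}" "y \<ge> a i" "y mod n = a i mod n" for i y
  proof -
    have "n dvd y - a i" using mod_eq_dvd_iff_nat[of "a i" y n] that by simp
    then obtain k where "y - a i = k * n" by (metis dvd_def mult.commute)
    then have "y = a i + k * n" using that by simp
    then show ?thesis using Hadd gen(1)[of i] mult that by auto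
  qed
  have below: "y \<ge> a i" if "i \<in> {2..n}" "y mod n = a i mod n" "y > a i - n" for i y
  proof (rule ccontr)
    assume "\<not> y \<ge> a i"
    then have le: "y \<le> a i" by simp
    have "a i mod n = y mod n" using that(2) by simp
    then have "n dvd a i - y" using mod_eq_dvd_iff_nat[OF le, of n] by simp
    moreover have "a i - y > 0" using \<open>\<not> y \<ge> a i\<close> by simp
    ultimately have "a i - y \<ge> n" by (simp add: dvd_imp_le)
    then show False using that le by arith
  qed
  have sym: False if ij: "i \<in> {2..n}" "j \<in> {2..n}" "a i mod n = a j mod n" "i < j" for i j
  proof -
    have le: "a i \<le> a j" using mono[of i j] ij by auto
    have lt: "a i < a j" using mono[of i j] ij by auto
    have "a j mod n = a i mod n" using ij(3) by simp
    then have "n dvd a j - a i" using mod_eq_dvd_iff_nat[OF le, of n] by simp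
    then obtain k where k: "a j - a i = n * k" by (rule dvdE)
    have k0: "k \<noteq> 0"
    proof
      assume "k = 0"
      then have "a j - a i = 0" using k by simp
      then show False using lt by simp
    qed
    have "a j = a i + (a j - a i)" using lt by simp
    also have "\<dots> = a i + k * n" using k by (simp add: mult.commute)
    finally have "a j = a i + k * n" .
    then show False using gen(3)[of j "a i" "k * n"] gen(1,2)[of i] mult[of k] k0 ij n3 by auto
  qed
  have inj: "inj_on (\<lambda>i. a i mod n) {2..n}"
  proof (rule inj_onI)
    fix i j assume ij: "i \<in> {2..n}" "j \<in> {2..n}" "a i mod n = a j mod n"
    show "i = j"
    proof (rule ccontr)
      assume "i \<noteq> j"
      then have "i < j \<or> j < i" by arith
      then show False using sym[of i j] sym[of j i] ij by auto
    qed
  qed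
  have img: "(\<lambda>i. a i mod n) ` {2..n} = {1..n-1}"
  proof (rule card_subset_eq)
    show "finite {1..n-1}" by simp
    show "(\<lambda>i. a i mod n) ` {2..n} \<subseteq> {1..n-1}"
    proof
      fix x assume "x \<in> (\<lambda>i. a i mod n) ` {2..n}"
      then obtain i where i: "i \<in> {2..n}" "x = a i mod n" by auto
      have "a i mod n < n" using n3 by simp
      then show "x \<in> {1..n-1}" using modnz[OF i(1)] i(2) by auto
    qed
    show "card ((\<lambda>i. a i mod n) ` {2..n}) = card {1..n-1}"
      using card_image[OF inj] n3 by simp
  qed
  have res: "\<exists>i\<in>{2..n}. a i mod n = r" if "0 < r" "r < n" for r
  proof -
    have "r \<in> {1..n-1}" using that by auto
    then have "r \<in> (\<lambda>i. a i mod n) ` {2..n}" using img by simp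
    then show ?thesis by auto
  qed
  define F where "F = a n - n"
  have an: "a n > n" using ge[of n] n3 by auto
  have ank: "a k \<le> a n" if "k \<in> {2..n}" for k
    using mono[of k n] that by (cases "k = n") auto
  have F1: "F \<ge> 1" using an F_def by simp
  have FH: "F \<notin> H"
  proof
    assume "F \<in> H"
    moreover have "a n = n + F" using an F_def by simp
    ultimately show False using gen(3)[of n n F] nH F1 n3 by auto
  qed
  have above: "y \<in> H" if "y > F" for y
  proof (cases "y mod n = 0")
    case True
    then have "y = (y div n) * n" using div_mult_mod_eq[of y n] by simp
    then show ?thesis using mult by metis
  next
    case False
    then obtain i where i: "i \<in> {2..n}" "a i mod n = y mod n" using res[of "y mod n"] n3 by auto
    have "y > a i - n" using that ank[OF i(1)] F_def by linarith
    then show ?thesis using below[of i y] same[of i y] i by auto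
  qed
  have key: "F - 1 \<in> H \<longleftrightarrow> a n \<noteq> a (n - 1) + 1"
  proof
    assume h: "F - 1 \<in> H"
    show "a n \<noteq> a (n - 1) + 1"
    proof
      assume e: "a n = a (n - 1) + 1"
      have m: "n - 1 \<in> {2..n}" using n3 by auto
      have "a (n - 1) = n + (F - 1)" using e F_def ge[OF m] by simp
      moreover have "F - 1 \<noteq> 0" using e F_def ge[OF m] by simp
      ultimately show False using gen(3)[of "n-1" n "F-1"] h nH n3 m by auto
    qed
  next
    assume e: "a n \<noteq> a (n - 1) + 1"
    have m: "n - 1 \<in> {2..n}" using n3 by auto
    have lt: "a (n - 1) < a n" using mono[of "n-1" n] n3 by auto
    then have lt2: "a (n - 1) + 2 \<le> a n" using e by simp
    show "F - 1 \<in> H"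
    proof (cases "(F - 1) mod n = 0")
      case True
      then have "F - 1 = ((F - 1) div n) * n" using div_mult_mod_eq[of "F - 1" n] by simp
      then show ?thesis using mult by metis
    next
      case False
      then obtain i where i: "i \<in> {2..n}" "a i mod n = (F - 1) mod n" using res[of "(F-1) mod n"] n3 by auto
      have "i \<noteq> n"
      proof
        assume "i = n"
        then have "a n mod n = (a n - 1 - n) mod n" using i F_def by (simp add: diff_diff_left)
        also have "... = (a n - 1) mod n" using an le_mod_geq[of n "a n - 1"] by simp
        finally have "a n mod n = (a n - 1) mod n" .
        moreover have le: "a n - 1 \<le> a n" by simp
        ultimately have "n dvd a n - (a n - 1)" using mod_eq_dvd_iff_nat[OF le, of n] by simp
        then show False using an n3 by simp
      qed
      then have "i \<le> n - 1" using i by auto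
      then have "a i \<le> a (n - 1)" using mono[of i "n-1"] i m by (cases "i = n - 1") auto
      then have "F - 1 > a i - n" using lt2 F_def an ge[OF i(1)] ge[OF m] by arith
      then show ?thesis using below[of i "F-1"] same[of i "F-1"] i by auto
    qed
  qed
  show ?thesis using F1 FH above one key by blast
qed


theorem corollary3p2:
  fixes H :: "nat set" and n :: nat and a :: "nat \<Rightarrow> nat"
  assumes "numerical_semigroup H"
    and "n \<ge> 3"
    and "strict_mono_on {1..n} a"
    and "a 1 = n"
    and "min_gens H = a ` {1..n}"
  shows "min_can_conductor (sgring H :: 'k::field fls set) pow_series \<longleftrightarrow> a n = a (n - 1) + 1"
proof -
  obtain F where F: "F \<ge> 1" "F \<notin> H" "\<forall>y>F. y \<in> H" "1 \<notin> H"
    "F - 1 \<in> H \<longleftrightarrow> a n \<noteq> a (n - 1) + 1"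
    using combi[OF assms] by blast
  interpret sgF H F
  proof
    show "0 \<in> H" using assms(1) unfolding numerical_semigroup_def by blast
    show "\<And>x y. x \<in> H \<Longrightarrow> y \<in> H \<Longrightarrow> x + y \<in> H" using assms(1) unfolding numerical_semigroup_def by blast
    show "F \<notin> H" by fact
    show "\<And>y. F < y \<Longrightarrow> y \<in> H" using F(3) by blast
  qed
  show ?thesis
  proof (cases "a n = a (n - 1) + 1")
    case True
    then have "F - 1 \<notin> H" using F(5) by blast
    then have "min_can_conductor (sgring H :: 'k fls set) pow_series"
      unfolding min_can_conductor_def using partB[OF F(1)] by blast
    then show ?thesis using True by blast
  next
    case False
    then have "F - 1 \<in> H" using F(5) by blast
    then have "\<not> min_can_conductor (sgring H :: 'k fls set) pow_series"
      using notMCC[OF F(4) _ F(1)] by blast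
    then show ?thesis using False by blast
  qed
qed

end
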